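(* Let $t:[0,1]\to[0,\infty]$ and $s:[0,\infty]\to[0,1]$ be continuous and increasing functions such that the function $G_{t,s}:[0,1]^2\to[0,1]$, $G_{t,s}(x,y)=s(t(x)+t(y))$, is a grouping function. Then: (1) $t(x)=\infty$ if and only if $x=1$; (2) $s(x)=1$ if and only if $x=\infty$.
   Context: "Increasing" means non-decreasing. Arithmetic in $[0,\infty]$ uses $c+\infty=\infty$; continuity on $[0,\infty]$ refers to the usual topology of the extended half-line. A grouping function is a map $G:[0,1]^2\to[0,1]$ that is (G1) commutative, (G2) $G(x,y)=0$ iff $x=y=0$, (G3) $G(x,y)=1$ iff $x=1$ or $y=1$, (G4) increasing in each variable, (G5) continuous. *)

theory Defs
  imports "HOL-Analysis.Analysis" "HOL-Library.Extended_Nonnegative_Real"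
begin

text \<open>Grouping function on the unit square [0,1]^2, conditions (G1)-(G5);
  the function is only constrained on the square, where it must take values in [0,1].\<close>
definition grouping_function :: "(real \<Rightarrow> real \<Rightarrow> real) \<Rightarrow> bool" where
  "grouping_function G \<longleftrightarrow>
     (\<forall>x\<in>{0..1}. \<forall>y\<in>{0..1}. G x y \<in> {0..1}) \<and>
     (\<forall>x\<in>{0..1}. \<forall>y\<in>{0..1}. G x y = G y x) \<and>
     (\<forall>x\<in>{0..1}. \<forall>y\<in>{0..1}. G x y = 0 \<longleftrightarrow> x = 0 \<and> y = 0) \<and>
     (\<forall>x\<in>{0..1}. \<forall>y\<in>{0..1}. G x y = 1 \<longleftrightarrow> x = 1 \<or> y = 1) \<and>
     (\<forall>x\<in>{0..1}. \<forall>x'\<in>{0..1}. \<forall>y\<in>{0..1}. x \<le> x' \<longrightarrow> G x y \<le> G x' y) \<and>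
     (\<forall>x\<in>{0..1}. \<forall>y\<in>{0..1}. \<forall>y'\<in>{0..1}. y \<le> y' \<longrightarrow> G x y \<le> G x y') \<and>
     continuous_on ({0..1} \<times> {0..1}) (\<lambda>(x, y). G x y)"

end

theory Submission
  imports Defs
begin

theorem theorem6p1:
  fixes t :: "real \<Rightarrow> ennreal" and s :: "ennreal \<Rightarrow> real"
  assumes t_cont: "continuous_on {0..1} t"
    and t_mono: "mono_on {0..1} t"
    and s_cont: "continuous_on UNIV s"
    and s_mono: "mono s"
    and s_range: "\<forall>z. s z \<in> {0..1}"
    and G: "grouping_function (\<lambda>x y. s (t x + t y))"
  shows "(\<forall>x\<in>{0..1}. t x = \<infinity> \<longleftrightarrow> x = 1) \<and> (\<forall>z. s z = 1 \<longleftrightarrow> z = \<infinity>)"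
proof -
  have G0: "s (t 0 + t 0) = 0" using G unfolding grouping_function_def by simp
  have G1: "s (t 1 + t 0) = 1" using G unfolding grouping_function_def by simp
  have Glt: "s (t x + t x) \<noteq> 1" if "0 \<le> x" "x < 1" for x
    using G that unfolding grouping_function_def by simp
  have t01: "t 0 \<le> t 1" using t_mono by (simp add: mono_on_def)
  have conn: "connected (t ` {0..1})"
    by (rule connected_continuous_image[OF t_cont]) simp
  have ivt: "\<exists>x\<in>{0..1}. t x = w" if "t 0 \<le> w" "w \<le> t 1" for w
  proof -
    have "w \<in> t ` {0..1}"
      by (rule connectedD_interval[OF conn _ _ that]) auto
    then show ?thesis by auto
  qed
  have t1: "t 1 = \<infinity>"
  proof (rule ccontr)
    assume ne: "t 1 \<noteq> \<infinity>"
    have neq: "t 0 \<noteq> t 1"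
    proof
      assume "t 0 = t 1" then show False using G0 G1 by simp
    qed
    have ne0: "t 0 \<noteq> \<infinity>" using ne t01 by (auto simp: top_unique)
    define a where "a = enn2real (t 0)"
    define b where "b = enn2real (t 1)"
    have ta: "t 0 = ennreal a" "a \<ge> 0" using ne0 a_def by (auto simp: ennreal_enn2real_if)
    have tb: "t 1 = ennreal b" "b \<ge> 0" using ne b_def by (auto simp: ennreal_enn2real_if)
    have ab: "a < b" using t01 neq ta tb by (auto simp: ennreal_le_iff)
    define m where "m = (a + b) / 2"
    have "t 0 \<le> ennreal m" "ennreal m \<le> t 1"
      using ta tb ab by (auto simp: m_def ennreal_le_iff intro!: ennreal_leI)
    then obtain x where x: "x \<in> {0..1}" "t x = ennreal m" using ivt by blast
    have "ennreal m \<noteq> ennreal b" using ab ta(2) by (simp add: m_def)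
    have "x \<noteq> 1" using x tb \<open>ennreal m \<noteq> ennreal b\<close> by auto
    then have "x < 1" using x by auto
    have "t x + t x = t 1 + t 0"
      using x ta tb ab by (simp add: m_def ennreal_plus[symmetric] del: ennreal_plus)
    then show False using Glt[of x] \<open>x < 1\<close> x G1 by auto
  qed
  have sinf: "s \<infinity> = 1" using G1 t1 by simp
  have A: "t x = \<infinity> \<longleftrightarrow> x = 1" if "x \<in> {0..1}" for x
  proof
    assume "t x = \<infinity>"
    moreover have "x < 1 \<Longrightarrow> False" using Glt[of x] that sinf calculation by auto
    ultimately show "x = 1" using that by force
  qed (use t1 in simp)
  have B: "s z = 1 \<longleftrightarrow> z = \<infinity>" for z
  proof
    assume sz: "s z = 1"
    show "z = \<infinity>"
    proof (rule ccontr)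
      assume zn: "z \<noteq> \<infinity>"
      show False
      proof (cases "z \<le> t 0")
        case True
        have "z \<le> t 0 + t 0" using True order_trans add_increasing2 by fastforce
        then have "s z \<le> s (t 0 + t 0)" using s_mono by (simp add: monoD)
        then show False using sz G0 by simp
      next
        case False
        then obtain x where x: "x \<in> {0..1}" "t x = z" using ivt[of z] t1 by (force simp: not_le)
        have "x \<noteq> 1" using x zn t1 by auto
        have "z \<le> t x + t x" using x by simp
        then have "s z \<le> s (t x + t x)" using s_mono by (simp add: monoD)
        then have "s (t x + t x) = 1" using sz s_range by (metis atLeastAtMost_iff order_antisym)
        then show False using Glt[of x] x \<open>x \<noteq> 1\<close> by auto
      qed
    qed
  qed (use sinf in simp)
  show ?thesis using A B by blast
qed

end
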